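(* For $\mathbf k\in\mathbb Z^{r'}_{++}$, $\mathbf l\in\mathbb Z^{r''}_{++}$ let $$C_0^d(\lambda,\mathbf k,\mathbf l)=\frac{\prod_{i=1}^{r'}\prod_{j=1}^{r''}(\lambda-\frac d2(i+j-1))_{k_i+l_j}}{\prod_{i=1}^{r'+1}\prod_{j=1}^{r''+1}(\lambda-\frac d2(i+j-2))_{k_i+l_j}},\qquad \phi_0(\mathbf k,\mathbf l)_a=\min\{k_i+l_j:1\le i\le r'+1,1\le j\le r''+1,i+j=a+1\}$$ ($1\le a\le r'+r''$, $k_{r'+1}=l_{r''+1}=0$). Let $1\le m_1'\le m_2'\le r'$ and $1\le m_1''\le m_2''\le r''$ with $k_1=\dots=k_{m_1'}$, $l_1=\dots=l_{m_1''}$ and $k_{m_2'+1}=l_{m_2''+1}=0$. Then the set of $\lambda\in\mathbb C$ where $(\lambda)_{\phi_0(\mathbf k,\mathbf l),d}C_0^d(\lambda,\mathbf k,\mathbf l)=0$ is contained in the real interval $$\Bigl[\tfrac d2\max\{m_1',m_1''\}-(k_1+l_1)+1,\ \tfrac d2(m_2'+m_2''-1)-\max\{k_{m_2'},l_{m_2''}\}\Bigr]$$ if $k_1l_1\ge1$, and is empty if $k_1l_1=0$. In particular, for $m=1,\dots,r'+r''-1$, if $\phi_0(\mathbf k,\mathbf l)_{m+1}=0$ and $\phi_0(\mathbf k,\mathbf l)_m\ne0$ (with $\phi_0(\mathbf k,\mathbf l)_{r'+r''+1}:=0$), then $C_0^d(\lambda,\mathbf k,\mathbf l)$ is holomorphic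 and non-zero at $\lambda=\frac d2 m$ and has a pole at $\lambda=\frac d2(m-1)$.
   Context: $r',r''\ge1$ are integers, $d>0$ is a real number, $\mathbb Z^s_{++}=\{\mathbf m\in\mathbb Z^s:m_1\ge\cdots\ge m_s\ge0\}$, $(a)_m=a(a+1)\cdots(a+m-1)$, and $(\lambda)_{\mathbf m,d}=\prod_{j=1}^{s}(\lambda-\frac d2(j-1))_{m_j}$ for $\mathbf m\in\mathbb Z^s_{\ge0}$. The product $(\lambda)_{\phi_0,d}C_0^d$ is an entire (polynomial) function of $\lambda$. *)

theory Defs
  imports "HOL-Complex_Analysis.Complex_Analysis"
begin

(* Vectors k in Z^{r}_{++} are represented as functions k :: nat => nat, indexed from 1,
   with k i = 0 for i > r (this encodes the convention k_{r+1} = 0). *)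

definition poch_d :: "real \<Rightarrow> nat \<Rightarrow> (nat \<Rightarrow> nat) \<Rightarrow> complex \<Rightarrow> complex" where
  "poch_d d s m lam =
     (\<Prod>j\<in>{1..s}. pochhammer (lam - of_real (d / 2 * of_nat (j - 1))) (m j))"

definition C0 :: "real \<Rightarrow> nat \<Rightarrow> nat \<Rightarrow> (nat \<Rightarrow> nat) \<Rightarrow> (nat \<Rightarrow> nat) \<Rightarrow> complex \<Rightarrow> complex" where
  "C0 d r1 r2 k l lam =
     (\<Prod>i\<in>{1..r1}. \<Prod>j\<in>{1..r2}.
        pochhammer (lam - of_real (d / 2 * of_nat (i + j - 1))) (k i + l j))
   / (\<Prod>i\<in>{1..r1+1}. \<Prod>j\<in>{1..r2+1}.
        pochhammer (lam - of_real (d / 2 * of_nat (i + j - 2))) (k i + l j))"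

definition phi0 :: "nat \<Rightarrow> nat \<Rightarrow> (nat \<Rightarrow> nat) \<Rightarrow> (nat \<Rightarrow> nat) \<Rightarrow> nat \<Rightarrow> nat" where
  "phi0 r1 r2 k l a =
     Min {k i + l j | i j. 1 \<le> i \<and> i \<le> r1 + 1 \<and> 1 \<le> j \<and> j \<le> r2 + 1 \<and> i + j = a + 1}"

(* The entire function (lam)_{phi_0(k,l),d} C_0^d(lam,k,l) (away from its removable
   singularities; its value at any point is its limit there). *)
definition PC0 :: "real \<Rightarrow> nat \<Rightarrow> nat \<Rightarrow> (nat \<Rightarrow> nat) \<Rightarrow> (nat \<Rightarrow> nat) \<Rightarrow> complex \<Rightarrow> complex" where
  "PC0 d r1 r2 k l lam = poch_d d (r1 + r2) (phi0 r1 r2 k l) lam * C0 d r1 r2 k l lam"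

end

theory Submission
  imports Defs
begin



lemma reindex_num:
  fixes g :: "nat \<Rightarrow> nat \<Rightarrow> 'a::comm_monoid_mult"
  shows "(\<Prod>i\<in>{1..a}. \<Prod>j\<in>{1..b}. g i j) =
         (\<Prod>s\<in>{1..a+b+1}. \<Prod>i\<in>{max 1 (s-b)..min a (s-1)}. g i (s-i))"
proof -
  have "(\<Prod>i\<in>{1..a}. \<Prod>j\<in>{1..b}. g i j) = (\<Prod>(i,j)\<in>{1..a}\<times>{1..b}. g i j)"
    by (rule prod.cartesian_product)
  also have "\<dots> = (\<Prod>(s,i)\<in>Sigma {1..a+b+1} (\<lambda>s. {max 1 (s-b)..min a (s-1)}). g i (s-i))"
    by (rule prod.reindex_bij_witness[of _ "\<lambda>(s,i). (i, s-i)" "\<lambda>(i,j). (i+j, i)"]) auto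
  also have "\<dots> = (\<Prod>s\<in>{1..a+b+1}. \<Prod>i\<in>{max 1 (s-b)..min a (s-1)}. g i (s-i))"
    by (rule prod.Sigma[symmetric]) auto
  finally show ?thesis .
qed

lemma reindex_den:
  fixes g :: "nat \<Rightarrow> nat \<Rightarrow> 'a::comm_monoid_mult"
  shows "(\<Prod>i\<in>{1..a+1}. \<Prod>j\<in>{1..b+1}. g i j) =
         (\<Prod>s\<in>{1..a+b+1}. \<Prod>i\<in>{max 1 (s-b)..min (a+1) s}. g i (Suc s-i))"
proof -
  have "(\<Prod>i\<in>{1..a+1}. \<Prod>j\<in>{1..b+1}. g i j) = (\<Prod>(i,j)\<in>{1..a+1}\<times>{1..b+1}. g i j)"
    by (rule prod.cartesian_product)
  also have "\<dots> = (\<Prod>(s,i)\<in>Sigma {1..a+b+1} (\<lambda>s. {max 1 (s-b)..min (a+1) s}). g i (Suc s-i))"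
    by (rule prod.reindex_bij_witness[of _ "\<lambda>(s,i). (i, Suc s-i)" "\<lambda>(i,j). (i+j-1, i)"]) auto
  also have "\<dots> = (\<Prod>s\<in>{1..a+b+1}. \<Prod>i\<in>{max 1 (s-b)..min (a+1) s}. g i (Suc s-i))"
    by (rule prod.Sigma[symmetric]) auto
  finally show ?thesis .
qed

lemma prod_skip:
  fixes g :: "nat \<Rightarrow> 'a::comm_monoid_mult"
  assumes "lo \<le> i0" "i0 \<le> Suc hi"
  shows "(\<Prod>i\<in>{lo..Suc hi}. g i) = g i0 * (\<Prod>i\<in>{lo..hi}. g (if i < i0 then i else Suc i))"
proof -
  have "(\<Prod>i\<in>{lo..Suc hi}. g i) = g i0 * (\<Prod>i\<in>{lo..Suc hi}-{i0}. g i)"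
    using assms by (subst prod.remove[of _ i0]) auto
  also have "(\<Prod>i\<in>{lo..Suc hi}-{i0}. g i) = (\<Prod>i\<in>{lo..hi}. g (if i < i0 then i else Suc i))"
    by (rule prod.reindex_bij_witness[of _ "\<lambda>i. if i < i0 then i else Suc i" "\<lambda>j. if j < i0 then j else j - 1"])
       (use assms in auto)
  finally show ?thesis .
qed




locale PCL =
  fixes d :: real and r1 r2 :: nat and k l :: "nat \<Rightarrow> nat"
  assumes d_pos: "d > 0"
    and r1: "r1 \<ge> 1" and r2: "r2 \<ge> 1"
    and k_mono: "\<forall>i j. 1 \<le> i \<and> i \<le> j \<and> j \<le> r1 \<longrightarrow> k j \<le> k i"
    and l_mono: "\<forall>i j. 1 \<le> i \<and> i \<le> j \<and> j \<le> r2 \<longrightarrow> l j \<le> l i"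
    and k_ext: "\<forall>i>r1. k i = 0"
    and l_ext: "\<forall>j>r2. l j = 0"
begin

lemma km: "1 \<le> i \<Longrightarrow> i \<le> j \<Longrightarrow> k j \<le> k i"
  using k_mono k_ext by (cases "j \<le> r1") auto
lemma lm: "1 \<le> i \<Longrightarrow> i \<le> j \<Longrightarrow> l j \<le> l i"
  using l_mono l_ext by (cases "j \<le> r2") auto

definition lo :: "nat \<Rightarrow> nat" where "lo s = max 1 (s - r2)"
definition hi :: "nat \<Rightarrow> nat" where "hi s = min r1 (s - 1)"
definition dv :: "nat \<Rightarrow> nat \<Rightarrow> nat" where "dv s i = k i + l (Suc s - i)"
definition nv :: "nat \<Rightarrow> nat \<Rightarrow> nat" where "nv s i = k i + l (s - i)"
definition cen :: "nat \<Rightarrow> real" where "cen s = d / 2 * real (s - 1)"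
definition i0 :: "nat \<Rightarrow> nat" where
  "i0 s = (LEAST i. i \<in> {lo s..Suc (hi s)} \<and> dv s i = Min (dv s ` {lo s..Suc (hi s)}))"
definition sg :: "nat \<Rightarrow> nat \<Rightarrow> nat" where "sg s i = (if i < i0 s then i else Suc i)"
definition F :: "real \<Rightarrow> nat \<Rightarrow> complex \<Rightarrow> complex" where
  "F c n x = pochhammer (x - complex_of_real c) n"
definition Rf :: "nat \<Rightarrow> nat \<Rightarrow> complex \<Rightarrow> complex" where
  "Rf s i x = pochhammer (x - of_real (cen s) + of_nat (dv s (sg s i))) (nv s i - dv s (sg s i))"
definition Q :: "complex \<Rightarrow> complex" where
  "Q x = (\<Prod>s\<in>{1..r1+r2+1}. \<Prod>i\<in>{lo s..hi s}. Rf s i x)"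
definition B :: "complex \<Rightarrow> complex" where
  "B x = (\<Prod>s\<in>{1..r1+r2+1}. \<Prod>i\<in>{lo s..hi s}. F (cen s) (dv s (sg s i)) x)"
definition A :: "complex \<Rightarrow> complex" where
  "A x = (\<Prod>s\<in>{1..r1+r2+1}. F (cen s) (dv s (i0 s)) x)"
definition Nn :: "complex \<Rightarrow> complex" where
  "Nn lam = (\<Prod>i\<in>{1..r1}. \<Prod>j\<in>{1..r2}.
        pochhammer (lam - of_real (d / 2 * of_nat (i + j - 1))) (k i + l j))"
definition Dd :: "complex \<Rightarrow> complex" where
  "Dd lam = (\<Prod>i\<in>{1..r1+1}. \<Prod>j\<in>{1..r2+1}.
        pochhammer (lam - of_real (d / 2 * of_nat (i + j - 2))) (k i + l j))"

lemma C0_eq: "C0 d r1 r2 k l x = Nn x / Dd x"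
  unfolding C0_def Nn_def Dd_def ..

lemma den_ne: "1 \<le> s \<Longrightarrow> s \<le> r1+r2+1 \<Longrightarrow> lo s \<le> Suc (hi s)"
  unfolding lo_def hi_def by auto

lemma i0_props:
  assumes "1 \<le> s" "s \<le> r1+r2+1"
  shows "i0 s \<in> {lo s..Suc (hi s)}"
    and "\<And>i. i \<in> {lo s..Suc (hi s)} \<Longrightarrow> dv s (i0 s) \<le> dv s i"
    and "\<And>i. i \<in> {lo s..Suc (hi s)} \<Longrightarrow> i < i0 s \<Longrightarrow> dv s (i0 s) < dv s i"
    and "dv s (i0 s) = Min (dv s ` {lo s..Suc (hi s)})"
proof -
  define D where "D = {lo s..Suc (hi s)}"
  have ne: "D \<noteq> {}" using den_ne[OF assms] by (auto simp: D_def)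
  have fin: "finite D" by (simp add: D_def)
  have "Min (dv s ` D) \<in> dv s ` D" using ne fin by (intro Min_in) auto
  then obtain j where j: "j \<in> D" "dv s j = Min (dv s ` D)" by auto
  have L: "i0 s \<in> D \<and> dv s (i0 s) = Min (dv s ` D)"
    unfolding i0_def D_def[symmetric] by (rule LeastI[of _ j]) (use j in auto)
  then show "i0 s \<in> {lo s..Suc (hi s)}" "dv s (i0 s) = Min (dv s ` {lo s..Suc (hi s)})"
    by (auto simp: D_def)
  show "dv s (i0 s) \<le> dv s i" if "i \<in> {lo s..Suc (hi s)}" for i
    using L that fin by (auto simp: D_def)
  show "dv s (i0 s) < dv s i" if "i \<in> {lo s..Suc (hi s)}" "i < i0 s" for i
  proof -
    have "\<not> (i \<in> D \<and> dv s i = Min (dv s ` D))"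
      using not_less_Least[OF that(2)[unfolded i0_def D_def[symmetric]]] .
    moreover have iD: "i \<in> D" using that by (simp add: D_def)
    moreover have "Min (dv s ` D) \<le> dv s i" using iD fin by simp
    ultimately show ?thesis using L by (simp add: order_less_le)
  qed
qed

lemma nv_ge:
  assumes "1 \<le> s" "s \<le> r1+r2+1" "i \<in> {lo s..hi s}"
  shows "dv s (sg s i) \<le> nv s i"
proof (cases "i < i0 s")
  case True
  have "l (Suc s - i) \<le> l (s - i)" using assms by (intro lm) (auto simp: lo_def hi_def)
  then show ?thesis using True by (simp add: sg_def dv_def nv_def)
next
  case False
  have "k (Suc i) \<le> k i" using assms by (intro km) (auto simp: lo_def hi_def)
  then show ?thesis using False by (simp add: sg_def dv_def nv_def)
qed

end


context PCL begin

lemma I1: "Nn x = B x * Q x"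
proof -
  have "Nn x = (\<Prod>s\<in>{1..r1+r2+1}. \<Prod>i\<in>{max 1 (s-r2)..min r1 (s-1)}.
        pochhammer (x - of_real (d / 2 * of_nat (i + (s-i) - 1))) (k i + l (s-i)))"
    unfolding Nn_def by (rule reindex_num)
  also have "\<dots> = (\<Prod>s\<in>{1..r1+r2+1}. \<Prod>i\<in>{lo s..hi s}.
        F (cen s) (dv s (sg s i)) x * Rf s i x)"
  proof (rule prod.cong[OF refl], rule prod.cong)
    fix s i assume s: "s \<in> {1..r1+r2+1}" and i: "i \<in> {lo s..hi s}"
    have e: "i + (s - i) - 1 = s - 1" using i by (auto simp: hi_def)
    show "pochhammer (x - of_real (d / 2 * of_nat (i + (s-i) - 1))) (k i + l (s-i)) =
          F (cen s) (dv s (sg s i)) x * Rf s i x"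
      unfolding e F_def Rf_def cen_def
      using pochhammer_product[OF nv_ge[of s i], of "x - of_real (d / 2 * real (s - 1))"] s i
      by (simp add: nv_def)
  qed (simp add: lo_def hi_def)
  also have "\<dots> = B x * Q x"
    unfolding B_def Q_def by (simp add: prod.distrib)
  finally show ?thesis .
qed

lemma I2: "Dd x = A x * B x"
proof -
  have "Dd x = (\<Prod>s\<in>{1..r1+r2+1}. \<Prod>i\<in>{max 1 (s-r2)..min (r1+1) s}.
        pochhammer (x - of_real (d / 2 * of_nat (i + (Suc s-i) - 2))) (k i + l (Suc s-i)))"
    unfolding Dd_def by (rule reindex_den)
  also have "\<dots> = (\<Prod>s\<in>{1..r1+r2+1}. F (cen s) (dv s (i0 s)) x *
                   (\<Prod>i\<in>{lo s..hi s}. F (cen s) (dv s (sg s i)) x))"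
  proof (rule prod.cong[OF refl])
    fix s assume s: "s \<in> {1..r1+r2+1}"
    have r: "{max 1 (s-r2)..min (r1+1) s} = {lo s..Suc (hi s)}"
      using s by (auto simp: lo_def hi_def)
    have "(\<Prod>i\<in>{lo s..Suc (hi s)}.
        pochhammer (x - of_real (d / 2 * of_nat (i + (Suc s-i) - 2))) (k i + l (Suc s-i)))
      = (\<Prod>i\<in>{lo s..Suc (hi s)}. F (cen s) (dv s i) x)"
    proof (rule prod.cong[OF refl])
      fix i assume i: "i \<in> {lo s..Suc (hi s)}"
      have e: "i + (Suc s - i) - 2 = s - 1" using i by (auto simp: hi_def)
      show "pochhammer (x - of_real (d / 2 * of_nat (i + (Suc s-i) - 2))) (k i + l (Suc s-i))
            = F (cen s) (dv s i) x"
        unfolding e F_def cen_def dv_def by simp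
    qed
    also have "\<dots> = F (cen s) (dv s (i0 s)) x *
                   (\<Prod>i\<in>{lo s..hi s}. F (cen s) (dv s (sg s i)) x)"
      using i0_props(1)[of s] s unfolding sg_def
      by (subst prod_skip[of _ "i0 s"]) (auto simp: if_distrib)
    finally show "(\<Prod>i\<in>{max 1 (s-r2)..min (r1+1) s}.
        pochhammer (x - of_real (d / 2 * of_nat (i + (Suc s-i) - 2))) (k i + l (Suc s-i)))
      = F (cen s) (dv s (i0 s)) x * (\<Prod>i\<in>{lo s..hi s}. F (cen s) (dv s (sg s i)) x)"
      unfolding r .
  qed
  also have "\<dots> = A x * B x" unfolding A_def B_def by (simp add: prod.distrib)
  finally show ?thesis .
qed

end


context PCL begin

lemma phi_set:
  assumes "1 \<le> s" "s \<le> r1+r2+1"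
  shows "{k i + l j | i j. 1 \<le> i \<and> i \<le> r1 + 1 \<and> 1 \<le> j \<and> j \<le> r2 + 1 \<and> i + j = s + 1}
         = dv s ` {lo s..Suc (hi s)}"
proof (intro set_eqI iffI)
  fix x assume "x \<in> {k i + l j | i j. 1 \<le> i \<and> i \<le> r1 + 1 \<and> 1 \<le> j \<and> j \<le> r2 + 1 \<and> i + j = s + 1}"
  then obtain i j where ij: "x = k i + l j" "1 \<le> i" "i \<le> r1 + 1" "1 \<le> j" "j \<le> r2 + 1" "i + j = s + 1"
    by blast
  have "j = Suc s - i" using ij by auto
  moreover have "i \<in> {lo s..Suc (hi s)}" using ij by (auto simp: lo_def hi_def)
  ultimately show "x \<in> dv s ` {lo s..Suc (hi s)}" using ij(1) unfolding dv_def by blast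
next
  fix x assume "x \<in> dv s ` {lo s..Suc (hi s)}"
  then obtain i where i: "i \<in> {lo s..Suc (hi s)}" "x = k i + l (Suc s - i)"
    by (auto simp: dv_def)
  then show "x \<in> {k i + l j | i j. 1 \<le> i \<and> i \<le> r1 + 1 \<and> 1 \<le> j \<and> j \<le> r2 + 1 \<and> i + j = s + 1}"
  proof -
    have "1 \<le> i" "i \<le> r1+1" "1 \<le> Suc s - i" "Suc s - i \<le> r2+1" "i + (Suc s - i) = s+1"
      using i assms by (auto simp: lo_def hi_def)
    then show ?thesis using i(2) by blast
  qed
qed

lemma phi_eq:
  assumes "1 \<le> s" "s \<le> r1+r2+1"
  shows "phi0 r1 r2 k l s = Min (dv s ` {lo s..Suc (hi s)})"
  unfolding phi0_def phi_set[OF assms] ..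

lemma phi_i0: "1 \<le> s \<Longrightarrow> s \<le> r1+r2+1 \<Longrightarrow> dv s (i0 s) = phi0 r1 r2 k l s"
  using phi_eq i0_props(4) by simp

lemma I3: "A x = poch_d d (r1 + r2) (phi0 r1 r2 k l) x"
proof -
  let ?s = "r1+r2+1"
  have last: "dv ?s (i0 ?s) = 0"
  proof -
    have "r1 + 1 \<in> {lo ?s..Suc (hi ?s)}" by (auto simp: lo_def hi_def)
    from i0_props(2)[OF _ _ this] have "dv ?s (i0 ?s) \<le> dv ?s (r1+1)" by simp
    moreover have "dv ?s (r1+1) = 0" using k_ext l_ext by (simp add: dv_def)
    ultimately show ?thesis by simp
  qed
  have "A x = (\<Prod>s\<in>{1..r1+r2}. F (cen s) (dv s (i0 s)) x) * F (cen ?s) (dv ?s (i0 ?s)) x"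
    unfolding A_def by (simp add: prod.cl_ivl_Suc)
  also have "F (cen ?s) (dv ?s (i0 ?s)) x = 1" using last by (simp add: F_def)
  also have "(\<Prod>s\<in>{1..r1+r2}. F (cen s) (dv s (i0 s)) x) = poch_d d (r1 + r2) (phi0 r1 r2 k l) x"
    unfolding poch_d_def
    by (rule prod.cong[OF refl]) (simp add: phi_i0 F_def cen_def)
  finally show ?thesis by simp
qed

lemma Dd_zero_fin: "finite {x. Dd x = 0}"
proof -
  have "{x. Dd x = 0} \<subseteq> (\<Union>i\<in>{1..r1+1}. \<Union>j\<in>{1..r2+1}.
          (\<lambda>t. complex_of_real (d / 2 * of_nat (i + j - 2)) - of_nat t) ` {..<k i + l j})"
  proof
    fix x assume "x \<in> {x. Dd x = 0}"
    then have "\<exists>i\<in>{1..r1+1}. \<exists>j\<in>{1..r2+1}.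
       pochhammer (x - of_real (d / 2 * of_nat (i + j - 2))) (k i + l j) = 0"
      unfolding Dd_def by (simp only: mem_Collect_eq prod_zero_iff[OF finite_atLeastAtMost])
    then obtain i j where ij: "i \<in> {1..r1+1}" "j \<in> {1..r2+1}"
       "pochhammer (x - of_real (d / 2 * of_nat (i + j - 2))) (k i + l j) = 0"
      by blast
    then obtain t where "t < k i + l j" "x - of_real (d / 2 * of_nat (i + j - 2)) = - of_nat t"
      by (auto simp: pochhammer_eq_0_iff)
    then have "t < k i + l j" "x = of_real (d / 2 * of_nat (i + j - 2)) - of_nat t"
      by (auto simp: algebra_simps)
    then show "x \<in> (\<Union>i\<in>{1..r1+1}. \<Union>j\<in>{1..r2+1}.
          (\<lambda>t. complex_of_real (d / 2 * of_nat (i + j - 2)) - of_nat t) ` {..<k i + l j})"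
      using ij by blast
  qed
  then show ?thesis by (rule finite_subset) auto
qed

lemma ev_Dd: "eventually (\<lambda>x. Dd x \<noteq> 0) (at z)"
proof -
  have "\<not> z islimpt {x. Dd x = 0}" by (rule islimpt_finite[OF Dd_zero_fin])
  then show ?thesis unfolding islimpt_iff_eventually by auto
qed

lemma PC0_Q: "Dd x \<noteq> 0 \<Longrightarrow> PC0 d r1 r2 k l x = Q x"
  unfolding PC0_def C0_eq I3[symmetric] using I1 I2 by (auto simp: field_simps)

lemma C0_Q: "Dd x \<noteq> 0 \<Longrightarrow> C0 d r1 r2 k l x = Q x / A x"
  unfolding C0_eq using I1 I2 by (auto simp: field_simps)

lemma poch_analytic:
  "f analytic_on S \<Longrightarrow> (\<lambda>x. pochhammer (f x :: complex) n) analytic_on S"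
  by (induction n) (auto simp: pochhammer_Suc intro!: analytic_intros)

lemma Q_analytic: "Q analytic_on S"
proof -
  have "(\<lambda>x. Q x) analytic_on S" unfolding Q_def Rf_def
    by (intro analytic_intros poch_analytic)
  then show ?thesis by simp
qed

lemma A_analytic: "A analytic_on S"
proof -
  have "(\<lambda>x. A x) analytic_on S" unfolding A_def F_def
    by (intro analytic_intros poch_analytic)
  then show ?thesis by simp
qed

lemma Q_zero:
  assumes "Q z = 0"
  shows "\<exists>s\<in>{1..r1+r2+1}. \<exists>i\<in>{lo s..hi s}. \<exists>t. t < nv s i - dv s (sg s i) \<and>
           z = complex_of_real (cen s - real (dv s (sg s i)) - real t)"
proof -
  have "\<exists>s\<in>{1..r1+r2+1}. \<exists>i\<in>{lo s..hi s}. Rf s i z = 0"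
    using assms unfolding Q_def by (simp only: prod_zero_iff[OF finite_atLeastAtMost])
  then obtain s i where si: "s \<in> {1..r1+r2+1}" "i \<in> {lo s..hi s}" "Rf s i z = 0"
    by blast
  then obtain t where "t < nv s i - dv s (sg s i)"
     "z - of_real (cen s) + of_nat (dv s (sg s i)) = - of_nat t"
    unfolding Rf_def by (auto simp: pochhammer_eq_0_iff)
  moreover from this(2) have "z = complex_of_real (cen s - real (dv s (sg s i)) - real t)"
    by (simp add: algebra_simps)
  ultimately show ?thesis using si by blast
qed

end


context PCL begin

lemma lv_facts:
  assumes "1 \<le> s" "s \<le> r1+r2+1" "i \<in> {lo s..hi s}"
  shows "1 \<le> i" "i \<le> r1" "1 \<le> s - i" "s - i \<le> r2" "i + (s - i) = s" "Suc s - i = Suc (s - i)"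
  using assms by (auto simp: lo_def hi_def)

lemma i0_facts:
  assumes "1 \<le> s" "s \<le> r1+r2+1"
  shows "1 \<le> i0 s" "i0 s \<le> s" "lo s \<le> i0 s" "i0 s \<le> Suc (hi s)" "1 \<le> Suc s - i0 s"
  using i0_props(1)[OF assms] assms by (auto simp: lo_def hi_def)

lemma H1:
  assumes "1 \<le> s" "s \<le> r1+r2+1" "\<forall>i'\<in>{lo s..Suc (hi s)}. dv s (lo s) \<le> dv s i'"
  shows "i0 s \<le> lo s"
proof (rule ccontr)
  assume "\<not> i0 s \<le> lo s"
  then have "dv s (i0 s) < dv s (lo s)"
    using i0_props(3)[OF assms(1,2), of "lo s"] den_ne[OF assms(1,2)] by auto
  moreover have "dv s (lo s) \<le> dv s (i0 s)" using assms(3) i0_props(1)[OF assms(1,2)] by blast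
  ultimately show False by simp
qed

lemma H2:
  assumes "1 \<le> s" "s \<le> r1+r2+1" "\<forall>i'\<in>{lo s..Suc (hi s)}. l (Suc s - i') = c"
    and "i0 s \<le> i" "i \<le> hi s"
  shows "k (Suc i) = k i"
proof -
  have "Suc (hi s) \<in> {lo s..Suc (hi s)}" using den_ne[OF assms(1,2)] by auto
  from i0_props(2)[OF assms(1,2) this] have "dv s (i0 s) \<le> dv s (Suc (hi s))" .
  moreover have "l (Suc s - i0 s) = c" using assms(3) i0_props(1)[OF assms(1,2)] by blast
  moreover have "l (Suc s - Suc (hi s)) = c" using assms(3) \<open>Suc (hi s) \<in> _\<close> by blast
  ultimately have a: "k (i0 s) \<le> k (Suc (hi s))" by (simp add: dv_def)
  have "1 \<le> i0 s" using i0_facts[OF assms(1,2)] by simp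
  have b: "k (Suc (hi s)) \<le> k (Suc i)" using assms(5) by (intro km) auto
  have c: "k (Suc i) \<le> k i" using \<open>1 \<le> i0 s\<close> assms(4) by (intro km) auto
  have e: "k i \<le> k (i0 s)" using \<open>1 \<le> i0 s\<close> assms(4) by (intro km) auto
  show ?thesis using a b c e by simp
qed

lemma LB:
  assumes s: "1 \<le> s" "s \<le> r1+r2+1" and i: "i \<in> {lo s..hi s}"
    and ne: "dv s (sg s i) < nv s i"
    and m1: "1 \<le> m1'" "\<forall>i\<in>{1..m1'}. k i = k 1" "1 \<le> m1''" "\<forall>j\<in>{1..m1''}. l j = l 1"
  shows "d / 2 * real (max m1' m1'') - real (k 1 + l 1) \<le> cen s - real (nv s i)"
proof (cases "max m1' m1'' \<le> s - 1")
  case True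
  note lf = lv_facts[OF s i]
  have "k i \<le> k 1" using lf by (intro km) auto
  moreover have "l (s - i) \<le> l 1" using lf by (intro lm) auto
  ultimately have "real (nv s i) \<le> real (k 1 + l 1)" by (simp add: nv_def)
  moreover have "d / 2 * real (max m1' m1'') \<le> d / 2 * real (s - 1)"
    using True d_pos by (intro mult_left_mono) auto
  ultimately show ?thesis unfolding cen_def by simp
next
  case False
  note lf = lv_facts[OF s i]
  note i0f = i0_facts[OF s]
  have False
  proof (cases "s \<le> m1'")
    case True
    have keq: "k p = k 1" if "1 \<le> p" "p \<le> s" for p using m1(2) that True by (meson atLeastAtMost_iff order_trans)
    have "\<forall>i'\<in>{lo s..Suc (hi s)}. dv s (lo s) \<le> dv s i'"
    proof
      fix i' assume "i' \<in> {lo s..Suc (hi s)}"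
      then have "1 \<le> lo s" "lo s \<le> i'" "i' \<le> s" using s by (auto simp: lo_def hi_def)
      then have "l (Suc s - lo s) \<le> l (Suc s - i')" by (intro lm) auto
      moreover have "k (lo s) = k i'" using keq[of "lo s"] keq[of i'] \<open>1 \<le> lo s\<close> \<open>lo s \<le> i'\<close> \<open>i' \<le> s\<close> by simp
      ultimately show "dv s (lo s) \<le> dv s i'" by (simp add: dv_def)
    qed
    from H1[OF s this] have "i0 s \<le> i" using i by auto
    then have "sg s i = Suc i" by (simp add: sg_def)
    moreover have "k (Suc i) = k 1" using lf by (intro keq) auto
    moreover have "k i = k 1" using lf by (intro keq) auto
    ultimately show False using ne lf by (simp add: dv_def nv_def)
  next
    case False
    then have sm: "s \<le> m1''" using \<open>\<not> max m1' m1'' \<le> s - 1\<close> by auto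
    have leq: "l p = l 1" if "1 \<le> p" "p \<le> s" for p using m1(4) that sm by (meson atLeastAtMost_iff order_trans)
    show False
    proof (cases "i < i0 s")
      case True
      have "l (s - i) = l 1" using lf by (intro leq) auto
      moreover have "l (Suc s - i) = l 1" using lf by (intro leq) auto
      ultimately show False using ne True by (simp add: sg_def dv_def nv_def)
    next
      case False
      have "\<forall>i'\<in>{lo s..Suc (hi s)}. l (Suc s - i') = l 1"
      proof
        fix i' assume "i' \<in> {lo s..Suc (hi s)}"
        then have "1 \<le> Suc s - i'" "Suc s - i' \<le> s" using s by (auto simp: lo_def hi_def)
        then show "l (Suc s - i') = l 1" by (rule leq)
      qed
      from H2[OF s this] False i have "k (Suc i) = k i" by auto
      then show False using ne False lf by (simp add: sg_def dv_def nv_def)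
    qed
  qed
  then show ?thesis ..
qed

end


context PCL begin

lemma UB:
  assumes s: "1 \<le> s" "s \<le> r1+r2+1" and i: "i \<in> {lo s..hi s}"
    and ne: "dv s (sg s i) < nv s i"
    and m2: "1 \<le> m2'" "1 \<le> m2''" "k (m2'+1) = 0" "l (m2''+1) = 0"
  shows "s \<le> m2' + m2''" "max (k m2') (l m2'') \<le> dv s (sg s i)"
proof -
  note lf = lv_facts[OF s i]
  note i0f = i0_facts[OF s]
  define j where "j = s - i"
  have j: "1 \<le> j" "i + j = s" "Suc s - i = Suc j" using lf by (auto simp: j_def)
  have kz: "k p = 0" if "m2' < p" for p using km[of "m2'+1" p] that m2 by auto
  have lz: "l p = 0" if "m2'' < p" for p using lm[of "m2''+1" p] that m2 by auto
  have dvi0: "k (i0 s) + l (Suc s - i0 s) = dv s (i0 s)" by (simp add: dv_def)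
  have "s \<le> m2' + m2'' \<and> max (k m2') (l m2'') \<le> dv s (sg s i)"
  proof (cases "i < i0 s")
    case True
    then have dvs: "dv s (sg s i) = k i + l (Suc j)" using j by (simp add: sg_def dv_def)
    have nvs: "nv s i = k i + l j" by (simp add: nv_def j_def)
    have "l (Suc j) < l j" using ne dvs nvs by simp
    then have jm: "j \<le> m2''" using lz[of j] by (cases "m2'' < j") auto
    have iden: "i \<in> {lo s..Suc (hi s)}" using i by auto
    have strict: "dv s (i0 s) < dv s i" using i0_props(3)[OF s iden True] .
    have "dv s i = k i + l (Suc j)" using j by (simp add: dv_def)
    have lb: "l j \<le> l (Suc s - i0 s)" using i0f True j by (intro lm) auto
    show ?thesis
    proof (cases "i \<le> m2'")
      case True
      have "k m2' \<le> k i" using lf True by (intro km) auto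
      moreover have "l m2'' \<le> dv s (sg s i)"
      proof (cases "Suc j \<le> m2''")
        case True
        then show ?thesis using dvs lm[of "Suc j" m2''] by simp
      next
        case False
        then have "j = m2''" using jm by simp
        then show ?thesis using strict lb dvi0 \<open>dv s i = _\<close> dvs by simp
      qed
      ultimately show ?thesis using True jm j dvs by simp
    next
      case False
      then have "k i = 0" using kz by simp
      have "l (Suc j) \<le> l j" using j by (intro lm) auto
      then have False using strict lb dvi0 \<open>dv s i = _\<close> \<open>k i = 0\<close> by simp
      then show ?thesis ..
    qed
  next
    case False
    then have dvs: "dv s (sg s i) = k (Suc i) + l j" using j by (simp add: sg_def dv_def j_def)
    have nvs: "nv s i = k i + l j" by (simp add: nv_def j_def)
    have kk: "k (Suc i) < k i" using ne dvs nvs by simp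
    then have im: "i \<le> m2'" using kz[of i] by (cases "m2' < i") auto
    have sden: "Suc i \<in> {lo s..Suc (hi s)}" using i by auto
    have mn: "dv s (i0 s) \<le> dv s (Suc i)" using i0_props(2)[OF s sden] .
    have "dv s (Suc i) = k (Suc i) + l j" using j by (simp add: dv_def j_def)
    have ki: "k i \<le> k (i0 s)" using i0f False by (intro km) auto
    have jm: "j \<le> m2''"
    proof (rule ccontr)
      assume "\<not> j \<le> m2''"
      then have "l j = 0" using lz by simp
      then show False using mn dvi0 ki kk \<open>dv s (Suc i) = _\<close> by simp
    qed
    have "l m2'' \<le> l j" using jm j by (intro lm) auto
    moreover have "k m2' \<le> dv s (sg s i)"
    proof (cases "Suc i \<le> m2'")
      case True
      then show ?thesis using dvs km[of "Suc i" m2'] by simp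
    next
      case False
      then have "i = m2'" using im by simp
      then show ?thesis using mn dvi0 ki dvs \<open>dv s (Suc i) = _\<close> by simp
    qed
    ultimately show ?thesis using im jm j dvs by simp
  qed
  then show "s \<le> m2' + m2''" "max (k m2') (l m2'') \<le> dv s (sg s i)" by auto
qed

end


context PCL begin

lemma empty_case:
  assumes s: "1 \<le> s" "s \<le> r1+r2+1" and i: "i \<in> {lo s..hi s}" and z: "k 1 * l 1 = 0"
  shows "\<not> dv s (sg s i) < nv s i"
proof -
  note lf = lv_facts[OF s i]
  note i0f = i0_facts[OF s]
  show ?thesis
  proof (cases "k 1 = 0")
    case True
    have k0: "k p = 0" if "1 \<le> p" for p using km[of 1 p] that True by simp
    have "\<forall>i'\<in>{lo s..Suc (hi s)}. dv s (lo s) \<le> dv s i'"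
    proof
      fix i' assume "i' \<in> {lo s..Suc (hi s)}"
      then have "1 \<le> lo s" "lo s \<le> i'" "i' \<le> s" using s by (auto simp: lo_def hi_def)
      then have "l (Suc s - lo s) \<le> l (Suc s - i')" by (intro lm) auto
      then show "dv s (lo s) \<le> dv s i'" using k0[of "lo s"] k0[of i'] \<open>1 \<le> lo s\<close> \<open>lo s \<le> i'\<close>
        by (simp add: dv_def)
    qed
    from H1[OF s this] have "i0 s \<le> i" using i by auto
    then show ?thesis using k0[of i] k0[of "Suc i"] lf by (simp add: sg_def dv_def nv_def)
  next
    case False
    then have L: "l 1 = 0" using z by simp
    have l0: "l p = 0" if "1 \<le> p" for p using lm[of 1 p] that L by simp
    show ?thesis
    proof (cases "i < i0 s")
      case True
      then show ?thesis using l0[of "s - i"] l0[of "Suc s - i"] lf by (simp add: sg_def dv_def nv_def)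
    next
      case False
      have "\<forall>i'\<in>{lo s..Suc (hi s)}. l (Suc s - i') = 0"
      proof
        fix i' assume "i' \<in> {lo s..Suc (hi s)}"
        then have "1 \<le> Suc s - i'" using s by (auto simp: lo_def hi_def)
        then show "l (Suc s - i') = 0" by (rule l0)
      qed
      from H2[OF s this] False i have "k (Suc i) = k i" by auto
      then show ?thesis using False lf by (simp add: sg_def dv_def nv_def)
    qed
  qed
qed

lemma Q_nz: "k 1 * l 1 = 0 \<Longrightarrow> Q z \<noteq> 0"
proof
  assume z: "k 1 * l 1 = 0" and "Q z = 0"
  from Q_zero[OF this(2)] obtain s i t where "s \<in> {1..r1+r2+1}" "i \<in> {lo s..hi s}"
    "t < nv s i - dv s (sg s i)" by blast
  then show False using empty_case[of s i] z by auto
qed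

lemma Q_root_interval:
  assumes "Q z = 0"
    and h: "1 \<le> m1'" "m1' \<le> m2'" "1 \<le> m1''" "m1'' \<le> m2''"
       "\<forall>i\<in>{1..m1'}. k i = k 1" "\<forall>j\<in>{1..m1''}. l j = l 1"
       "k (m2' + 1) = 0" "l (m2'' + 1) = 0"
  shows "z \<in> complex_of_real ` {d / 2 * real (max m1' m1'') - real (k 1 + l 1) + 1 ..
                              d / 2 * (real (m2' + m2'') - 1) - real (max (k m2') (l m2''))}"
proof -
  from Q_zero[OF assms(1)] obtain s i t where si: "s \<in> {1..r1+r2+1}" "i \<in> {lo s..hi s}"
    and t: "t < nv s i - dv s (sg s i)"
    and zt: "z = complex_of_real (cen s - real (dv s (sg s i)) - real t)" by blast
  have s: "1 \<le> s" "s \<le> r1+r2+1" using si by auto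
  have ne: "dv s (sg s i) < nv s i" using t by simp
  have lb: "d / 2 * real (max m1' m1'') - real (k 1 + l 1) \<le> cen s - real (nv s i)"
    using LB[OF s si(2) ne h(1) h(5) h(3) h(6)] .
  have ub1: "s \<le> m2' + m2''" and ub2: "max (k m2') (l m2'') \<le> dv s (sg s i)"
    using UB[OF s si(2) ne _ _ h(7) h(8)] h by auto
  have "real t + 1 \<le> real (nv s i) - real (dv s (sg s i))" using t ne by linarith
  moreover have "d / 2 * real (s - 1) \<le> d / 2 * (real (m2' + m2'') - 1)"
    using ub1 s d_pos by (intro mult_left_mono) auto
  moreover have "real (max (k m2') (l m2'')) \<le> real (dv s (sg s i))" using ub2 by linarith
  ultimately show ?thesis unfolding zt using lb by (intro imageI) (auto simp: cen_def)
qed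

end



lemma last_pos:
  fixes f :: "nat \<Rightarrow> nat"
  assumes "1 \<le> f 1" "1 \<le> r" "\<forall>i>r. f i = 0"
  shows "\<exists>p. 1 \<le> p \<and> p \<le> r \<and> 1 \<le> f p \<and> f (p+1) = 0"
proof -
  define S where "S = {i\<in>{1..r}. 1 \<le> f i}"
  have fin: "finite S" and one: "1 \<in> S" using assms by (auto simp: S_def)
  define p where "p = Max S"
  have pS: "p \<in> S" unfolding p_def using fin one by (intro Max_in) auto
  have "f (p+1) = 0"
  proof (cases "p + 1 \<le> r")
    case True
    have "\<not> p + 1 \<in> S" using Max_ge[OF fin, of "p+1"] by (auto simp: p_def)
    then show ?thesis using True by (auto simp: S_def)
  next
    case False then show ?thesis using assms(3) by auto
  qed
  then show ?thesis using pS by (auto simp: S_def)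
qed

context PCL begin

lemma Q_tendsto: "(Q \<longlongrightarrow> Q z) (at z)"
  using analytic_at_imp_isCont[OF Q_analytic] by (simp add: isCont_def)

lemma part1_lim:
  assumes "(PC0 d r1 r2 k l \<longlongrightarrow> 0) (at lam)"
  shows "Q lam = 0"
proof -
  have ev: "eventually (\<lambda>x. PC0 d r1 r2 k l x = Q x) (at lam)"
    using ev_Dd by (rule eventually_mono) (rule PC0_Q)
  have "(Q \<longlongrightarrow> 0) (at lam)" using assms tendsto_cong[OF ev] by simp
  from tendsto_unique[OF at_neq_bot Q_tendsto this] show ?thesis .
qed

lemma phi_zero_ex:
  assumes "1 \<le> s" "s \<le> r1+r2+1" "phi0 r1 r2 k l s = 0"
  shows "\<exists>i\<in>{lo s..Suc (hi s)}. dv s i = 0"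
  using i0_props(1)[OF assms(1,2)] phi_i0[OF assms(1,2)] assms(3) by auto

lemma phi_le:
  assumes "1 \<le> s" "s \<le> r1+r2+1" "i \<in> {lo s..Suc (hi s)}"
  shows "phi0 r1 r2 k l s \<le> dv s i"
  using i0_props(2)[OF assms] phi_i0[OF assms(1,2)] by simp

lemma phi_zero_up:
  assumes "1 \<le> s" "s + 1 \<le> r1+r2+1" "phi0 r1 r2 k l s = 0"
  shows "phi0 r1 r2 k l (s+1) = 0"
proof -
  have s: "1 \<le> s" "s \<le> r1+r2+1" using assms by auto
  obtain i where i: "i \<in> {lo s..Suc (hi s)}" "dv s i = 0" using phi_zero_ex[OF s assms(3)] by blast
  have ki: "k i = 0" and li: "l (Suc s - i) = 0" using i by (auto simp: dv_def)
  have i1: "1 \<le> i" "i \<le> s" "s - r2 \<le> i" "i \<le> r1 + 1" using i s by (auto simp: lo_def hi_def)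
  have s1: "1 \<le> s+1" "s+1 \<le> r1+r2+1" using assms by auto
  show ?thesis
  proof (cases "s + 1 - r2 \<le> i")
    case True
    have iden: "i \<in> {lo (s+1)..Suc (hi (s+1))}" using True i1 by (auto simp: lo_def hi_def)
    have "l (Suc (s+1) - i) \<le> l (Suc s - i)" using i1 by (intro lm) auto
    then have "dv (s+1) i = 0" using ki li by (simp add: dv_def)
    then show ?thesis using phi_le[OF s1 iden] by simp
  next
    case False
    then have ieq: "i = s - r2" using i1 by simp
    have iden: "Suc i \<in> {lo (s+1)..Suc (hi (s+1))}" using False i1 assms by (auto simp: lo_def hi_def)
    have "k (Suc i) \<le> k i" using i1 by (intro km) auto
    moreover have "Suc (s+1) - Suc i = Suc s - i" using i1 by simp
    ultimately have "dv (s+1) (Suc i) = 0" using ki li by (simp add: dv_def)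
    then show ?thesis using phi_le[OF s1 iden] by simp
  qed
qed

lemma phi_zero_ge:
  assumes "1 \<le> m" "phi0 r1 r2 k l (m+1) = 0" "m + 1 \<le> a" "a \<le> r1+r2+1"
  shows "phi0 r1 r2 k l a = 0"
  using assms(3,4)
proof (induction a rule: dec_induct)
  case base then show ?case using assms(2) by simp
next
  case (step n)
  then show ?case using phi_zero_up[of n] assms(1) by simp
qed

end


context PCL begin

lemma m_eq:
  assumes m: "1 \<le> m" "m \<le> r1+r2-1" and z1: "phi0 r1 r2 k l (m+1) = 0" and nz: "phi0 r1 r2 k l m \<noteq> 0"
    and p: "1 \<le> p" "p \<le> r1" "1 \<le> k p" "k (p+1) = 0"
    and q: "1 \<le> q" "q \<le> r2" "1 \<le> l q" "l (q+1) = 0"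
  shows "m = p + q"
proof -
  have kpos: "1 \<le> k i" if "1 \<le> i" "i \<le> p" for i using km[OF that] p by simp
  have lpos: "1 \<le> l i" if "1 \<le> i" "i \<le> q" for i using lm[OF that] q by simp
  have kz: "k i = 0" if "p < i" for i using km[of "p+1" i] that p by auto
  have lz: "l i = 0" if "q < i" for i using lm[of "q+1" i] that q by auto
  have s1: "1 \<le> m+1" "m+1 \<le> r1+r2+1" using m by auto
  obtain i where i: "i \<in> {lo (m+1)..Suc (hi (m+1))}" "dv (m+1) i = 0"
    using phi_zero_ex[OF s1 z1] by blast
  have i1: "1 \<le> i" "i \<le> m+1" using i by (auto simp: lo_def hi_def)
  have "k i = 0" "l (Suc (m+1) - i) = 0" using i by (auto simp: dv_def)
  then have "p < i" "q < Suc (m+1) - i" using kpos[of i] lpos[of "Suc (m+1) - i"] i1 by force+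
  then have ge: "p + q \<le> m" using i1 by linarith
  have le: "m \<le> p + q"
  proof (rule ccontr)
    assume "\<not> m \<le> p + q"
    define i' where "i' = max (p+1) (m - r2)"
    have sm: "1 \<le> m" "m \<le> r1+r2+1" using m by auto
    have iden: "i' \<in> {lo m..Suc (hi m)}"
      using \<open>\<not> m \<le> p + q\<close> m p by (auto simp: lo_def hi_def i'_def)
    have "k i' = 0" using kz by (simp add: i'_def)
    moreover have "l (Suc m - i') = 0"
      using \<open>\<not> m \<le> p + q\<close> m q by (intro lz) (auto simp: i'_def)
    ultimately have "dv m i' = 0" by (simp add: dv_def)
    then show False using phi_le[OF sm iden] nz by simp
  qed
  show ?thesis using ge le by simp
qed

lemma Q_root_le:
  assumes m: "1 \<le> m" "m \<le> r1+r2-1" and z1: "phi0 r1 r2 k l (m+1) = 0" and nz: "phi0 r1 r2 k l m \<noteq> 0"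
    and kl: "1 \<le> k 1 * l 1" and Qz: "Q (complex_of_real r) = 0"
  shows "r \<le> d / 2 * (real m - 1) - 1"
proof -
  have "1 \<le> k 1" "1 \<le> l 1" using kl by (auto simp: Suc_le_eq)
  obtain p where p: "1 \<le> p" "p \<le> r1" "1 \<le> k p" "k (p+1) = 0"
    using last_pos[of k r1] \<open>1 \<le> k 1\<close> r1 k_ext by auto
  obtain q where q: "1 \<le> q" "q \<le> r2" "1 \<le> l q" "l (q+1) = 0"
    using last_pos[of l r2] \<open>1 \<le> l 1\<close> r2 l_ext by auto
  have meq: "m = p + q" using m_eq[OF m z1 nz p q] .
  have "complex_of_real r \<in> complex_of_real ` {d / 2 * real (max 1 1) - real (k 1 + l 1) + 1 ..
                              d / 2 * (real (p + q) - 1) - real (max (k p) (l q))}"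
    by (rule Q_root_interval[OF Qz]) (use p q in auto)
  then have "r \<le> d / 2 * (real (p + q) - 1) - real (max (k p) (l q))" by auto
  moreover have "1 \<le> real (max (k p) (l q))" using p by simp
  ultimately show ?thesis using meq by simp
qed

lemma A_x1:
  assumes "1 \<le> m" "m \<le> r1+r2" "phi0 r1 r2 k l m \<noteq> 0"
  shows "A (complex_of_real (d / 2 * (real m - 1))) = 0"
proof -
  have h: "pochhammer (complex_of_real (d / 2 * (real m - 1)) - of_real (d / 2 * of_nat (m - 1)))
         (phi0 r1 r2 k l m) = 0"
    using assms by (simp add: pochhammer_0_left of_nat_diff)
  show ?thesis unfolding I3 poch_d_def prod_zero_iff[OF finite_atLeastAtMost]
    using assms h by (intro bexI[of _ m]) auto
qed

lemma A_x0:
  assumes "1 \<le> m" "phi0 r1 r2 k l (m+1) = 0"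
  shows "A (complex_of_real (d / 2 * real m)) \<noteq> 0"
proof -
  have "\<forall>j\<in>{1..r1+r2}. pochhammer (complex_of_real (d / 2 * real m) - of_real (d / 2 * of_nat (j - 1)))
          (phi0 r1 r2 k l j) \<noteq> 0"
  proof
  fix j assume j: "j \<in> {1..r1+r2}"
  show "pochhammer (complex_of_real (d / 2 * real m) - of_real (d / 2 * of_nat (j - 1)))
          (phi0 r1 r2 k l j) \<noteq> 0"
  proof (cases "j \<le> m")
    case True
    have "real (j - 1) < real m" using True j by auto
    then have "d / 2 * real (j - 1) < d / 2 * real m" using d_pos by (intro mult_strict_left_mono) auto
    then have pos: "0 < d / 2 * real m - d / 2 * real (j - 1)" by simp
    show ?thesis
    proof
      assume "pochhammer (complex_of_real (d / 2 * real m) - of_real (d / 2 * of_nat (j - 1)))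
          (phi0 r1 r2 k l j) = 0"
      then obtain t where "complex_of_real (d / 2 * real m) - of_real (d / 2 * of_nat (j - 1)) = - of_nat t"
        by (auto simp: pochhammer_eq_0_iff)
      then have "complex_of_real (d / 2 * real m - d / 2 * real (j - 1)) = complex_of_real (- real t)"
        by simp
      then have "d / 2 * real m - d / 2 * real (j - 1) = - real t" by (simp only: of_real_eq_iff)
      then show False using pos by simp
    qed
  next
    case False
    then have "phi0 r1 r2 k l j = 0" using phi_zero_ge[OF assms(1,2), of j] j by auto
    then show ?thesis by simp
  qed
  qed
  then show ?thesis unfolding I3 poch_d_def prod_zero_iff[OF finite_atLeastAtMost] by blast
qed

end


context PCL begin

lemma A_tendsto: "(A \<longlongrightarrow> A z) (at z)"
  using analytic_at_imp_isCont[OF A_analytic] by (simp add: isCont_def)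

lemma main:
  shows
    "(\<forall>m1' m2' m1'' m2''.
        1 \<le> m1' \<and> m1' \<le> m2' \<and> m2' \<le> r1 \<and>
        1 \<le> m1'' \<and> m1'' \<le> m2'' \<and> m2'' \<le> r2 \<and>
        (\<forall>i\<in>{1..m1'}. k i = k 1) \<and> (\<forall>j\<in>{1..m1''}. l j = l 1) \<and>
        k (m2' + 1) = 0 \<and> l (m2'' + 1) = 0 \<longrightarrow>
        (k 1 * l 1 \<ge> 1 \<longrightarrow>
           {lam. (PC0 d r1 r2 k l \<longlongrightarrow> 0) (at lam)} \<subseteq>
           complex_of_real ` {d / 2 * real (max m1' m1'') - real (k 1 + l 1) + 1 ..
                              d / 2 * (real (m2' + m2'') - 1) - real (max (k m2') (l m2''))}) \<and>
        (k 1 * l 1 = 0 \<longrightarrow> {lam. (PC0 d r1 r2 k l \<longlongrightarrow> 0) (at lam)} = {}))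
     \<and>
     (\<forall>m\<in>{1..r1 + r2 - 1}.
        phi0 r1 r2 k l (m + 1) = 0 \<and> phi0 r1 r2 k l m \<noteq> 0 \<longrightarrow>
          (\<exists>g. g analytic_on {complex_of_real (d / 2 * real m)} \<and>
               g (complex_of_real (d / 2 * real m)) \<noteq> 0 \<and>
               (\<forall>\<^sub>F w in at (complex_of_real (d / 2 * real m)). C0 d r1 r2 k l w = g w)) \<and>
          is_pole (C0 d r1 r2 k l) (complex_of_real (d / 2 * (real m - 1))))"
proof (intro conjI allI impI ballI)
  fix m1' m2' m1'' m2''
  assume h: "1 \<le> m1' \<and> m1' \<le> m2' \<and> m2' \<le> r1 \<and>
        1 \<le> m1'' \<and> m1'' \<le> m2'' \<and> m2'' \<le> r2 \<and>
        (\<forall>i\<in>{1..m1'}. k i = k 1) \<and> (\<forall>j\<in>{1..m1''}. l j = l 1) \<and>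
        k (m2' + 1) = 0 \<and> l (m2'' + 1) = 0"
  show "{lam. (PC0 d r1 r2 k l \<longlongrightarrow> 0) (at lam)} \<subseteq>
           complex_of_real ` {d / 2 * real (max m1' m1'') - real (k 1 + l 1) + 1 ..
                              d / 2 * (real (m2' + m2'') - 1) - real (max (k m2') (l m2''))}"
  proof
    fix lam assume "lam \<in> {lam. (PC0 d r1 r2 k l \<longlongrightarrow> 0) (at lam)}"
    then have "Q lam = 0" using part1_lim by simp
    then show "lam \<in> complex_of_real ` {d / 2 * real (max m1' m1'') - real (k 1 + l 1) + 1 ..
                              d / 2 * (real (m2' + m2'') - 1) - real (max (k m2') (l m2''))}"
      by (intro Q_root_interval[OF \<open>Q lam = 0\<close>]) (insert h, elim conjE, assumption)+
  qed
next
  fix m1' m2' m1'' m2''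
  assume "1 \<le> m1' \<and> m1' \<le> m2' \<and> m2' \<le> r1 \<and>
        1 \<le> m1'' \<and> m1'' \<le> m2'' \<and> m2'' \<le> r2 \<and>
        (\<forall>i\<in>{1..m1'}. k i = k 1) \<and> (\<forall>j\<in>{1..m1''}. l j = l 1) \<and>
        k (m2' + 1) = 0 \<and> l (m2'' + 1) = 0"
    and "k 1 * l 1 = 0"
  then show "{lam. (PC0 d r1 r2 k l \<longlongrightarrow> 0) (at lam)} = {}"
    using part1_lim Q_nz by blast
next
  fix m assume m: "m \<in> {1..r1 + r2 - 1}"
    and ph: "phi0 r1 r2 k l (m + 1) = 0 \<and> phi0 r1 r2 k l m \<noteq> 0"
  have m1: "1 \<le> m" "m \<le> r1+r2-1" using m by auto
  define x0 where "x0 = complex_of_real (d / 2 * real m)"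
  define x1 where "x1 = complex_of_real (d / 2 * (real m - 1))"
  have Qnz: "Q x0 \<noteq> 0 \<and> Q x1 \<noteq> 0"
  proof (cases "k 1 * l 1 = 0")
    case True then show ?thesis using Q_nz by blast
  next
    case False
    then have kl: "1 \<le> k 1 * l 1" by simp
    have a: "Q x0 \<noteq> 0"
    proof
      assume "Q x0 = 0"
      from Q_root_le[OF m1 _ _ kl this[unfolded x0_def]] ph
      have "d / 2 * real m \<le> d / 2 * (real m - 1) - 1" by auto
      then show False using d_pos by (simp add: algebra_simps)
    qed
    have b: "Q x1 \<noteq> 0"
    proof
      assume "Q x1 = 0"
      from Q_root_le[OF m1 _ _ kl this[unfolded x1_def]] ph
      have "d / 2 * (real m - 1) \<le> d / 2 * (real m - 1) - 1" by auto
      then show False by simp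
    qed
    show ?thesis using a b by simp
  qed
  have A0: "A x0 \<noteq> 0" unfolding x0_def using A_x0 m1 ph by auto
  have A1: "A x1 = 0" unfolding x1_def using A_x1[of m] m1 ph by auto
  have evC: "eventually (\<lambda>w. C0 d r1 r2 k l w = Q w / A w) (at z)" for z
    using ev_Dd by (rule eventually_mono) (rule C0_Q)
  show "\<exists>g. g analytic_on {complex_of_real (d / 2 * real m)} \<and>
               g (complex_of_real (d / 2 * real m)) \<noteq> 0 \<and>
               (\<forall>\<^sub>F w in at (complex_of_real (d / 2 * real m)). C0 d r1 r2 k l w = g w)"
  proof (intro exI[of _ "\<lambda>w. Q w / A w"] conjI)
    show "(\<lambda>w. Q w / A w) analytic_on {complex_of_real (d / 2 * real m)}"
    proof (intro analytic_on_divide Q_analytic A_analytic)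
      fix z assume "z \<in> {complex_of_real (d / 2 * real m)}"
      then show "A z \<noteq> 0" using A0 unfolding x0_def by (metis singletonD)
    qed
    show "Q (complex_of_real (d / 2 * real m)) / A (complex_of_real (d / 2 * real m)) \<noteq> 0"
      using A0 Qnz unfolding x0_def by simp
    show "\<forall>\<^sub>F w in at (complex_of_real (d / 2 * real m)). C0 d r1 r2 k l w = Q w / A w"
      by (rule evC)
  qed
  have evA: "eventually (\<lambda>w. A w \<noteq> 0) (at x1)"
    using ev_Dd by (rule eventually_mono) (use I2 in auto)
  have "filterlim A (at 0) (at x1)"
    using A_tendsto[of x1] A1 evA by (intro filterlim_atI) auto
  from filterlim_divide_at_infinity[OF Q_tendsto this] Qnz
  have "filterlim (\<lambda>w. Q w / A w) at_infinity (at x1)" by simp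
  then have "filterlim (C0 d r1 r2 k l) at_infinity (at x1)"
    using filterlim_cong[OF refl refl evC[of x1]] by simp
  then show "is_pole (C0 d r1 r2 k l) (complex_of_real (d / 2 * (real m - 1)))"
    unfolding is_pole_def x1_def .
qed

end


theorem proposition5p5:
  fixes d :: real and r1 r2 :: nat and k l :: "nat \<Rightarrow> nat"
  assumes d_pos: "d > 0"
    and r1: "r1 \<ge> 1" and r2: "r2 \<ge> 1"
    and k_mono: "\<forall>i j. 1 \<le> i \<and> i \<le> j \<and> j \<le> r1 \<longrightarrow> k j \<le> k i"
    and l_mono: "\<forall>i j. 1 \<le> i \<and> i \<le> j \<and> j \<le> r2 \<longrightarrow> l j \<le> l i"
    and k_ext: "\<forall>i>r1. k i = 0"
    and l_ext: "\<forall>j>r2. l j = 0"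
  shows
    "(\<forall>m1' m2' m1'' m2''.
        1 \<le> m1' \<and> m1' \<le> m2' \<and> m2' \<le> r1 \<and>
        1 \<le> m1'' \<and> m1'' \<le> m2'' \<and> m2'' \<le> r2 \<and>
        (\<forall>i\<in>{1..m1'}. k i = k 1) \<and> (\<forall>j\<in>{1..m1''}. l j = l 1) \<and>
        k (m2' + 1) = 0 \<and> l (m2'' + 1) = 0 \<longrightarrow>
        (k 1 * l 1 \<ge> 1 \<longrightarrow>
           {lam. (PC0 d r1 r2 k l \<longlongrightarrow> 0) (at lam)} \<subseteq>
           complex_of_real ` {d / 2 * real (max m1' m1'') - real (k 1 + l 1) + 1 ..
                              d / 2 * (real (m2' + m2'') - 1) - real (max (k m2') (l m2''))}) \<and>
        (k 1 * l 1 = 0 \<longrightarrow> {lam. (PC0 d r1 r2 k l \<longlongrightarrow> 0) (at lam)} = {}))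
     \<and>
     (\<forall>m\<in>{1..r1 + r2 - 1}.
        phi0 r1 r2 k l (m + 1) = 0 \<and> phi0 r1 r2 k l m \<noteq> 0 \<longrightarrow>
          (\<exists>g. g analytic_on {complex_of_real (d / 2 * real m)} \<and>
               g (complex_of_real (d / 2 * real m)) \<noteq> 0 \<and>
               (\<forall>\<^sub>F w in at (complex_of_real (d / 2 * real m)). C0 d r1 r2 k l w = g w)) \<and>
          is_pole (C0 d r1 r2 k l) (complex_of_real (d / 2 * (real m - 1))))"
proof -
  interpret PCL d r1 r2 k l using assms by unfold_locales
  show ?thesis by (rule main)
qed

end
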